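(* In the setting of the context, for every integer $k\ge 1$ there is a constant $C_k$ (depending on $k$ and $p$, not on $N$) such that for all $N\ge 1$, \[ M_{2k}(N)\;\le\;(2k-1)!!+\frac{C_k}{N}, \] where $(2k-1)!!=(2k-1)(2k-3)\cdots 3\cdot 1$ is the $2k$-th moment of the standard Gaussian.
   Context: Let $p$ be a probability density on $\mathbb{R}$ with mean $0$, variance $1$ and finite moments of all orders. For $N\ge 1$, let $b_1,\dots,b_{N-1}$ be independent random variables with density $p$, set $b_0=0$, and let $A=A_N$ be the $N\times N$ real symmetric Toeplitz matrix with entries $a_{ij}=b_{|i-j|}$ ($1\le i,j\le N$). Let $\lambda_1(A),\dots,\lambda_N(A)$ be its eigenvalues. For an integer $k\ge 0$ define $M_k(A,N)=N^{-(k/2+1)}\sum_{i=1}^N\lambda_i(A)^k = N^{-(k/2+1)}\,\mathrm{Trace}(A^k)$, and $M_k(N)=\mathbb{E}[M_k(A,N)]$, the expectation over the random entries. *)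

theory Defs
  imports "HOL-Probability.Probability" "Jordan_Normal_Form.Matrix"
begin

definition good_density :: "(real \<Rightarrow> real) \<Rightarrow> bool" where
  "good_density p \<longleftrightarrow>
     p \<in> borel_measurable borel \<and> (\<forall>x. 0 \<le> p x) \<and>
     integrable lborel p \<and> (LINT x|lborel. p x) = 1 \<and>
     (\<forall>m::nat. integrable lborel (\<lambda>x. \<bar>x\<bar> ^ m * p x)) \<and>
     (LINT x|lborel. x * p x) = 0 \<and>
     (LINT x|lborel. x\<^sup>2 * p x) = 1"

definition toeplitz_space :: "(real \<Rightarrow> real) \<Rightarrow> nat \<Rightarrow> (nat \<Rightarrow> real) measure" where
  "toeplitz_space p N = PiM {1..<N} (\<lambda>_. density lborel (\<lambda>x. ennreal (p x)))"

text \<open>The N x N symmetric Toeplitz matrix a_ij = b_{|i-j|} with b_0 = 0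
  (0-based indices, which does not change |i-j|).\<close>
definition toeplitz_mat :: "nat \<Rightarrow> (nat \<Rightarrow> real) \<Rightarrow> real mat" where
  "toeplitz_mat N b = mat N N (\<lambda>(i, j).
      let d = nat \<bar>int i - int j\<bar> in if d = 0 then 0 else b d)"

definition mat_trace :: "real mat \<Rightarrow> real" where
  "mat_trace A = (\<Sum>i<dim_row A. A $$ (i, i))"

definition Mk_AN :: "nat \<Rightarrow> nat \<Rightarrow> (nat \<Rightarrow> real) \<Rightarrow> real" where
  "Mk_AN k N b = real N powr (-(real k / 2 + 1)) * mat_trace (toeplitz_mat N b ^\<^sub>m k)"

definition Mk :: "(real \<Rightarrow> real) \<Rightarrow> nat \<Rightarrow> nat \<Rightarrow> real" where
  "Mk p k N = (\<integral>b. Mk_AN k N b \<partial>toeplitz_space p N)"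

definition odd_double_fact :: "nat \<Rightarrow> nat" where
  "odd_double_fact k = (\<Prod>i\<in>{1..k}. 2 * i - 1)"

end

theory Submission
  imports Defs
begin

definition fpf :: "nat set \<Rightarrow> (nat \<Rightarrow> nat) set" where
  "fpf S = {\<sigma> \<in> S \<rightarrow>\<^sub>E S. \<forall>x\<in>S. \<sigma> x \<noteq> x \<and> \<sigma> (\<sigma> x) = x}"

lemma fpf_finite: "finite S \<Longrightarrow> finite (fpf S)"
  unfolding fpf_def by (rule finite_subset[of _ "S \<rightarrow>\<^sub>E S"]) (auto intro: finite_PiE)

lemma odd_double_fact_Suc: "odd_double_fact (Suc k) = (2 * k + 1) * odd_double_fact k"
  unfolding odd_double_fact_def by (simp add: prod.cl_ivl_Suc mult.commute)

lemma fpf_card: "finite S \<Longrightarrow> card S = 2 * k \<Longrightarrow> card (fpf S) \<le> odd_double_fact k"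
proof (induction k arbitrary: S)
  case 0
  then have "S = {}" by auto
  then show ?case by (simp add: fpf_def odd_double_fact_def)
next
  case (Suc k)
  from Suc.prems obtain x where x: "x \<in> S" by fastforce
  define P where "P y = {\<sigma> \<in> fpf S. \<sigma> x = y}" for y
  have cov: "fpf S = (\<Union>y\<in>S - {x}. P y)"
    using x unfolding P_def fpf_def by (auto simp: PiE_iff)
  have Pc: "card (P y) \<le> odd_double_fact k" if y: "y \<in> S - {x}" for y
  proof -
    let ?T = "S - {x, y}"
    have cT: "card ?T = 2 * k" using Suc.prems x y by (simp add: card_Diff_subset)
    have "card (P y) \<le> card (fpf ?T)"
    proof (rule card_inj_on_le[where f = "\<lambda>\<sigma>. restrict \<sigma> ?T"])
      show "inj_on (\<lambda>\<sigma>. restrict \<sigma> ?T) (P y)"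
      proof (rule inj_onI)
        fix \<sigma> \<tau> assume a: "\<sigma> \<in> P y" "\<tau> \<in> P y" "restrict \<sigma> ?T = restrict \<tau> ?T"
        show "\<sigma> = \<tau>"
        proof
          fix z
          show "\<sigma> z = \<tau> z"
          proof (cases "z \<in> ?T")
            case True then show ?thesis using a(3) by (metis restrict_apply')
          next
            case False
            then consider "z = x" | "z = y" | "z \<notin> S" by auto
            then show ?thesis
              using a(1,2) x y unfolding P_def fpf_def by cases (auto simp: PiE_iff extensional_def)
          qed
        qed
      qed
      show "(\<lambda>\<sigma>. restrict \<sigma> ?T) ` P y \<subseteq> fpf ?T"
      proof
        fix \<tau> assume "\<tau> \<in> (\<lambda>\<sigma>. restrict \<sigma> ?T) ` P y"
        then obtain \<sigma> where s: "\<sigma> \<in> P y" and t: "\<tau> = restrict \<sigma> ?T" by auto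
        have s1: "\<sigma> \<in> S \<rightarrow>\<^sub>E S" "\<And>z. z \<in> S \<Longrightarrow> \<sigma> z \<noteq> z \<and> \<sigma> (\<sigma> z) = z" "\<sigma> x = y"
          using s unfolding P_def fpf_def by auto
        have sy: "\<sigma> y = x" using s1 x by metis
        have "\<sigma> z \<in> ?T" if "z \<in> ?T" for z
        proof -
          have "\<sigma> z \<in> S" using s1(1) that by auto
          moreover have "\<sigma> z \<noteq> x"
          proof
            assume "\<sigma> z = x"
            then have "z = \<sigma> x" using s1(2)[of z] that by auto
            then show False using s1(3) that by auto
          qed
          moreover have "\<sigma> z \<noteq> y"
          proof
            assume "\<sigma> z = y"
            then have "z = \<sigma> y" using s1(2)[of z] that by auto
            then show False using sy that by auto
          qed
          ultimately show ?thesis by auto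
        qed
        then show "\<tau> \<in> fpf ?T" unfolding t fpf_def using s1(2) by auto
      qed
      show "finite (fpf ?T)" using Suc.prems by (intro fpf_finite) auto
    qed
    also have "\<dots> \<le> odd_double_fact k" using Suc.IH[of ?T] cT Suc.prems by auto
    finally show ?thesis .
  qed
  have "card (fpf S) \<le> (\<Sum>y\<in>S - {x}. card (P y))"
    unfolding cov by (rule card_UN_le) (use Suc.prems in auto)
  also have "\<dots> \<le> (\<Sum>y\<in>S - {x}. odd_double_fact k)" by (rule sum_mono) (rule Pc)
  also have "\<dots> = (2 * k + 1) * odd_double_fact k" using Suc.prems x by simp
  finally show ?case by (simp add: odd_double_fact_Suc)
qed


definition PS :: "nat \<Rightarrow> nat \<Rightarrow> (nat \<Rightarrow> nat) set" where
  "PS N m = {f \<in> {..m} \<rightarrow>\<^sub>E {..<N}. f 0 = f m}"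

definition st :: "(nat \<Rightarrow> nat) \<Rightarrow> nat \<Rightarrow> int" where
  "st f j = int (f (Suc j)) - int (f j)"

definition dd :: "(nat \<Rightarrow> nat) \<Rightarrow> nat \<Rightarrow> nat" where
  "dd f j = nat \<bar>st f j\<bar>"

lemma PS_finite: "finite (PS N m)"
  unfolding PS_def by (rule finite_subset[of _ "{..m} \<rightarrow>\<^sub>E {..<N}"]) (auto intro: finite_PiE)

lemma path_eq:
  assumes f: "f \<in> {..m} \<rightarrow>\<^sub>E X" and g: "g \<in> {..m} \<rightarrow>\<^sub>E Y" and f0: "f 0 = g 0"
    and s: "\<And>j. j < m \<Longrightarrow> st f j = st g j"
  shows "f = g"
proof -
  have "j \<le> m \<Longrightarrow> f j = g j" for j
  proof (induction j)
    case 0 then show ?case using f0 by simp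
  next
    case (Suc j)
    then have "f j = g j" by simp
    moreover have "st f j = st g j" using s Suc.prems by simp
    ultimately show ?case unfolding st_def by simp
  qed
  moreover have "j > m \<Longrightarrow> f j = g j" for j
    using f g by (auto simp: PiE_iff extensional_def)
  ultimately show ?thesis by (metis ext not_le)
qed

lemma dd_lt: "f \<in> PS N m \<Longrightarrow> j < m \<Longrightarrow> dd f j < N"
proof -
  assume a: "f \<in> PS N m" "j < m"
  then have "f (Suc j) < N" "f j < N" unfolding PS_def by (auto simp: PiE_iff)
  then show ?thesis unfolding dd_def st_def by auto
qed

lemma choose_le_pow: "(n::nat) choose r \<le> n ^ r"
  by (cases "r \<le> n") (auto intro: binomial_le_pow simp: binomial_eq_0)

lemma card_SD: "finite D \<Longrightarrow> card {x::int. nat \<bar>x\<bar> \<in> D} \<le> 2 * card D"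
proof -
  assume fD: "finite D"
  have "{x::int. nat \<bar>x\<bar> \<in> D} \<subseteq> (\<lambda>(v,e). if e then int v else - int v) ` (D \<times> (UNIV::bool set))"
  proof
    fix x :: int assume "x \<in> {x::int. nat \<bar>x\<bar> \<in> D}"
    then have "nat \<bar>x\<bar> \<in> D" by simp
    then show "x \<in> (\<lambda>(v,e). if e then int v else - int v) ` (D \<times> (UNIV::bool set))"
      by (intro image_eqI[of _ _ "(nat \<bar>x\<bar>, x \<ge> 0)"]) auto
  qed
  then have "card {x::int. nat \<bar>x\<bar> \<in> D} \<le> card ((\<lambda>(v,e). if e then int v else - int v) ` (D \<times> (UNIV::bool set)))"
    using fD by (intro card_mono) auto
  also have "\<dots> \<le> card (D \<times> (UNIV::bool set))" by (rule card_image_le) (use fD in auto)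
  also have "\<dots> = 2 * card D" by (simp add: card_cartesian_product)
  finally show ?thesis .
qed

lemma card_fixedD:
  assumes fD: "finite D" and cD: "card D \<le> r"
  shows "card {f \<in> PS N m. dd f ` {..<m} \<subseteq> D} \<le> N * (2 * r) ^ m"
proof -
  let ?SD = "{x::int. nat \<bar>x\<bar> \<in> D}"
  have fSD: "finite ?SD"
  proof -
    have "?SD \<subseteq> (\<lambda>(v,e). if e then int v else - int v) ` (D \<times> (UNIV::bool set))"
    proof
      fix x :: int assume "x \<in> ?SD"
      then have "nat \<bar>x\<bar> \<in> D" by simp
      then show "x \<in> (\<lambda>(v,e). if e then int v else - int v) ` (D \<times> (UNIV::bool set))"
        by (intro image_eqI[of _ _ "(nat \<bar>x\<bar>, x \<ge> 0)"]) auto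
    qed
    then show ?thesis by (rule finite_subset) (use fD in auto)
  qed
  have "card {f \<in> PS N m. dd f ` {..<m} \<subseteq> D} \<le> card ({..<N} \<times> ({..<m} \<rightarrow>\<^sub>E ?SD))"
  proof (rule card_inj_on_le[where f = "\<lambda>f. (f 0, restrict (st f) {..<m})"])
    show "inj_on (\<lambda>f. (f 0, restrict (st f) {..<m})) {f \<in> PS N m. dd f ` {..<m} \<subseteq> D}"
    proof (rule inj_onI)
      fix f g assume a: "f \<in> {f \<in> PS N m. dd f ` {..<m} \<subseteq> D}" "g \<in> {f \<in> PS N m. dd f ` {..<m} \<subseteq> D}"
        "(f 0, restrict (st f) {..<m}) = (g 0, restrict (st g) {..<m})"
      show "f = g"
        apply (rule path_eq[of f m "{..<N}" g "{..<N}"])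
        using a unfolding PS_def apply auto
        by (metis lessThan_iff restrict_apply')
    qed
    show "(\<lambda>f. (f 0, restrict (st f) {..<m})) ` {f \<in> PS N m. dd f ` {..<m} \<subseteq> D} \<subseteq> {..<N} \<times> ({..<m} \<rightarrow>\<^sub>E ?SD)"
      unfolding PS_def dd_def by (auto simp: PiE_iff restrict_PiE_iff image_subset_iff)
    show "finite ({..<N} \<times> ({..<m} \<rightarrow>\<^sub>E ?SD))" using fSD by (auto intro: finite_PiE)
  qed
  also have "\<dots> = N * card ?SD ^ m" by (simp add: card_cartesian_product card_PiE)
  also have "\<dots> \<le> N * (2 * r) ^ m"
    using card_SD[OF fD] cD by (intro mult_le_mono2 power_mono) auto
  finally show ?thesis .
qed

lemma card_fewvals:
  assumes N: "N \<ge> 1"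
  shows "card {f \<in> PS N m. card (dd f ` {..<m}) \<le> r} \<le> (r + 1) * N ^ r * (N * (2 * r) ^ m)"
proof -
  let ?Ds = "\<lambda>j. {D. D \<subseteq> {..<N} \<and> card D = j}"
  have sub: "{f \<in> PS N m. card (dd f ` {..<m}) \<le> r} \<subseteq>
      (\<Union>j\<in>{..r}. \<Union>D\<in>?Ds j. {f \<in> PS N m. dd f ` {..<m} \<subseteq> D})"
  proof
    fix f assume f: "f \<in> {f \<in> PS N m. card (dd f ` {..<m}) \<le> r}"
    then have "dd f ` {..<m} \<subseteq> {..<N}" using dd_lt by auto
    then show "f \<in> (\<Union>j\<in>{..r}. \<Union>D\<in>?Ds j. {f \<in> PS N m. dd f ` {..<m} \<subseteq> D})"
      using f by (intro UN_I[of "card (dd f ` {..<m})"] UN_I[of "dd f ` {..<m}"]) auto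
  qed
  have fin: "finite (?Ds j)" for j by (rule finite_subset[of _ "Pow {..<N}"]) auto
  have "card {f \<in> PS N m. card (dd f ` {..<m}) \<le> r} \<le>
      card (\<Union>j\<in>{..r}. \<Union>D\<in>?Ds j. {f \<in> PS N m. dd f ` {..<m} \<subseteq> D})"
    by (rule card_mono[OF _ sub]) (use PS_finite fin in auto)
  also have "\<dots> \<le> (\<Sum>j\<in>{..r}. card (\<Union>D\<in>?Ds j. {f \<in> PS N m. dd f ` {..<m} \<subseteq> D}))"
    by (rule card_UN_le) auto
  also have "\<dots> \<le> (\<Sum>j\<in>{..r}. \<Sum>D\<in>?Ds j. card {f \<in> PS N m. dd f ` {..<m} \<subseteq> D})"
    by (intro sum_mono card_UN_le fin)
  also have "\<dots> \<le> (\<Sum>j\<in>{..r}. \<Sum>D\<in>?Ds j. N * (2 * r) ^ m)"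
    by (intro sum_mono card_fixedD) (auto intro: finite_subset)
  also have "\<dots> = (\<Sum>j\<in>{..r}. (N choose j) * (N * (2 * r) ^ m))"
    by (simp add: n_subsets)
  also have "\<dots> \<le> (\<Sum>j\<in>{..r}. N ^ r * (N * (2 * r) ^ m))"
  proof (intro sum_mono mult_le_mono1)
    fix j assume "j \<in> {..r}"
    then have "N ^ j \<le> N ^ r" using N by (intro power_increasing) auto
    then show "N choose j \<le> N ^ r" using choose_le_pow[of N j] by linarith
  qed
  also have "\<dots> = (r + 1) * N ^ r * (N * (2 * r) ^ m)" by (simp add: algebra_simps)
  finally show ?thesis .
qed


definition opn :: "(nat \<Rightarrow> nat) \<Rightarrow> nat \<Rightarrow> nat set" where
  "opn \<sigma> m = {a \<in> {..<m}. a < \<sigma> a}"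

lemma fpfD:
  assumes "\<sigma> \<in> fpf {..<m}" "j < m"
  shows "\<sigma> j < m" "\<sigma> j \<noteq> j" "\<sigma> (\<sigma> j) = j"
  using assms unfolding fpf_def by (auto simp: PiE_iff)

lemma opn_cover:
  assumes "\<sigma> \<in> fpf {..<m}" "j < m" "j \<notin> opn \<sigma> m"
  shows "\<sigma> j \<in> opn \<sigma> m" "\<sigma> j < j"
  using fpfD[OF assms(1,2)] assms(3) unfolding opn_def by auto

lemma opn_disj:
  assumes "\<sigma> \<in> fpf {..<m}"
  shows "opn \<sigma> m \<inter> \<sigma> ` opn \<sigma> m = {}"
proof (rule ccontr)
  assume "opn \<sigma> m \<inter> \<sigma> ` opn \<sigma> m \<noteq> {}"
  then obtain b where b: "b \<in> opn \<sigma> m" "\<sigma> b \<in> opn \<sigma> m" by auto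
  have "b < m" "b < \<sigma> b" "\<sigma> b < \<sigma> (\<sigma> b)" using b unfolding opn_def by auto
  then show False using fpfD(3)[OF assms, of b] by simp
qed

lemma opn_inj:
  assumes "\<sigma> \<in> fpf {..<m}"
  shows "inj_on \<sigma> (opn \<sigma> m)"
proof (rule inj_onI)
  fix a b assume "a \<in> opn \<sigma> m" "b \<in> opn \<sigma> m" "\<sigma> a = \<sigma> b"
  moreover have "a < m" "b < m" using calculation unfolding opn_def by auto
  ultimately show "a = b" using fpfD(3)[OF assms] by metis
qed

lemma opn_union:
  assumes "\<sigma> \<in> fpf {..<m}"
  shows "{..<m} = opn \<sigma> m \<union> \<sigma> ` opn \<sigma> m"
proof
  show "{..<m} \<subseteq> opn \<sigma> m \<union> \<sigma> ` opn \<sigma> m"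
  proof
    fix j assume j: "j \<in> {..<m}"
    show "j \<in> opn \<sigma> m \<union> \<sigma> ` opn \<sigma> m"
    proof (cases "j \<in> opn \<sigma> m")
      case False
      then have "\<sigma> j \<in> opn \<sigma> m" using opn_cover assms j by auto
      moreover have "\<sigma> (\<sigma> j) = j" using fpfD assms j by auto
      ultimately show ?thesis by (metis UnI2 image_eqI)
    qed auto
  qed
  show "opn \<sigma> m \<union> \<sigma> ` opn \<sigma> m \<subseteq> {..<m}"
  proof
    fix x assume "x \<in> opn \<sigma> m \<union> \<sigma> ` opn \<sigma> m"
    then show "x \<in> {..<m}" using fpfD(1)[OF assms] unfolding opn_def by auto
  qed
qed

lemma opn_card:
  assumes "\<sigma> \<in> fpf {..<m}" "m = 2 * k"
  shows "card (opn \<sigma> m) \<le> k"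
proof -
  have f: "finite (opn \<sigma> m)" unfolding opn_def by auto
  have "m = card (opn \<sigma> m \<union> \<sigma> ` opn \<sigma> m)" using opn_union[OF assms(1)] by (metis card_lessThan)
  also have "\<dots> = card (opn \<sigma> m) + card (\<sigma> ` opn \<sigma> m)"
    by (rule card_Un_disjoint) (use f opn_disj[OF assms(1)] in auto)
  also have "\<dots> = 2 * card (opn \<sigma> m)" using card_image[OF opn_inj[OF assms(1)]] by simp
  finally show ?thesis using assms(2) by simp
qed

lemma pair_sum:
  assumes "\<sigma> \<in> fpf {..<m}"
  shows "(\<Sum>j<m. h j) = (\<Sum>a\<in>opn \<sigma> m. h a + h (\<sigma> a))"
proof -
  have f: "finite (opn \<sigma> m)" unfolding opn_def by auto
  have "(\<Sum>j<m. h j) = (\<Sum>j\<in>opn \<sigma> m \<union> \<sigma> ` opn \<sigma> m. h j)" using opn_union[OF assms] by simp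
  also have "\<dots> = (\<Sum>j\<in>opn \<sigma> m. h j) + (\<Sum>j\<in>\<sigma> ` opn \<sigma> m. h j)"
    by (rule sum.union_disjoint) (use f opn_disj[OF assms] in auto)
  also have "(\<Sum>j\<in>\<sigma> ` opn \<sigma> m. h j) = (\<Sum>a\<in>opn \<sigma> m. h (\<sigma> a))"
    by (rule sum.reindex_cong[OF opn_inj[OF assms]]) auto
  finally show ?thesis by (simp add: sum.distrib)
qed

lemma st_sum: "f \<in> PS N m \<Longrightarrow> (\<Sum>j<m. st f j) = 0"
  unfolding st_def PS_def using sum_lessThan_telescope[of "\<lambda>j. int (f j)" m] by simp

definition Qopp :: "nat \<Rightarrow> nat \<Rightarrow> (nat \<Rightarrow> nat) \<Rightarrow> (nat \<Rightarrow> nat) set" where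
  "Qopp N m \<sigma> = {f \<in> PS N m. \<forall>j<m. st f (\<sigma> j) = - st f j}"

lemma Qopp_card:
  assumes s: "\<sigma> \<in> fpf {..<m}" and mk: "m = 2 * k" and N: "N \<ge> 1"
  shows "card (Qopp N m \<sigma>) \<le> N * N ^ k"
proof -
  let ?O = "opn \<sigma> m"
  have fO: "finite ?O" unfolding opn_def by auto
  have "card (Qopp N m \<sigma>) \<le> card ({..<N} \<times> (?O \<rightarrow>\<^sub>E {..<N}))"
  proof (rule card_inj_on_le[where f = "\<lambda>f. (f 0, restrict (\<lambda>a. f (Suc a)) ?O)"])
    show "inj_on (\<lambda>f. (f 0, restrict (\<lambda>a. f (Suc a)) ?O)) (Qopp N m \<sigma>)"
    proof (rule inj_onI)
      fix f g assume f: "f \<in> Qopp N m \<sigma>" and g: "g \<in> Qopp N m \<sigma>"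
        and e: "(f 0, restrict (\<lambda>a. f (Suc a)) ?O) = (g 0, restrict (\<lambda>a. g (Suc a)) ?O)"
      have e0: "f 0 = g 0" using e by simp
      have eO: "f (Suc a) = g (Suc a)" if "a \<in> ?O" for a
      proof -
        have "restrict (\<lambda>a. f (Suc a)) ?O a = restrict (\<lambda>a. g (Suc a)) ?O a" using e by simp
        then show ?thesis using that by simp
      qed
      have "\<forall>j'\<le>j. f j' = g j'" if "j \<le> m" for j
        using that
      proof (induction j)
        case 0 then show ?case using e0 by simp
      next
        case (Suc i)
        then have IH: "\<forall>j'\<le>i. f j' = g j'" by simp
        have im: "i < m" using Suc.prems by simp
        have "f (Suc i) = g (Suc i)"
        proof (cases "i \<in> ?O")
          case True then show ?thesis using eO by simp
        next
          case False
          have a: "\<sigma> i \<in> ?O" "\<sigma> i < i" using opn_cover[OF s im False] by auto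
          have ss: "\<sigma> (\<sigma> i) = i" using fpfD[OF s im] by simp
          have si: "\<sigma> i < m" using fpfD[OF s im] by simp
          have "st f (\<sigma> (\<sigma> i)) = - st f (\<sigma> i)" using f si unfolding Qopp_def by blast
          then have "st f i = - st f (\<sigma> i)" using ss by simp
          moreover have "st g (\<sigma> (\<sigma> i)) = - st g (\<sigma> i)" using g si unfolding Qopp_def by blast
          then have "st g i = - st g (\<sigma> i)" using ss by simp
          moreover have "st f (\<sigma> i) = st g (\<sigma> i)" using IH a unfolding st_def by simp
          moreover have "f i = g i" using IH by simp
          ultimately show ?thesis unfolding st_def by simp
        qed
        then show ?case using IH le_Suc_eq by auto
      qed
      then have "\<And>j. j \<in> {..m} \<Longrightarrow> f j = g j" by auto
      then show "f = g" using f g unfolding Qopp_def PS_def by (intro PiE_ext[of f "{..m}" "\<lambda>_. {..<N}" g]) auto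
    qed
    show "(\<lambda>f. (f 0, restrict (\<lambda>a. f (Suc a)) ?O)) ` Qopp N m \<sigma> \<subseteq> {..<N} \<times> (?O \<rightarrow>\<^sub>E {..<N})"
    proof (rule image_subsetI)
      fix f assume "f \<in> Qopp N m \<sigma>"
      then have "f \<in> {..m} \<rightarrow>\<^sub>E {..<N}" unfolding Qopp_def PS_def by auto
      then show "(f 0, restrict (\<lambda>a. f (Suc a)) ?O) \<in> {..<N} \<times> (?O \<rightarrow>\<^sub>E {..<N})"
        unfolding opn_def by (auto simp: PiE_iff restrict_PiE_iff)
    qed
    show "finite ({..<N} \<times> (?O \<rightarrow>\<^sub>E {..<N}))" using fO by (auto intro: finite_PiE)
  qed
  also have "\<dots> = N * N ^ card ?O" using fO by (simp add: card_cartesian_product card_PiE)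
  also have "\<dots> \<le> N * N ^ k" using opn_card[OF s mk] N by (intro mult_le_mono2 power_increasing) auto
  finally show ?thesis .
qed


definition Rset :: "nat \<Rightarrow> nat \<Rightarrow> (nat \<Rightarrow> nat) \<Rightarrow> nat \<Rightarrow> (nat \<Rightarrow> nat) set" where
  "Rset N m \<sigma> a0 = {f \<in> PS N m. (\<forall>j<m. dd f (\<sigma> j) = dd f j) \<and> st f (\<sigma> a0) = st f a0}"

lemma dd_eq_st: "dd f i = dd f j \<Longrightarrow> st f i = st f j \<or> st f i = - st f j"
  unfolding dd_def by auto

lemma st_bound: "f \<in> PS N m \<Longrightarrow> j < m \<Longrightarrow> st f j \<in> {- int N..int N}"
proof -
  assume a: "f \<in> PS N m" "j < m"
  then have "f (Suc j) < N" "f j < N" unfolding PS_def by (auto simp: PiE_iff)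
  then show ?thesis unfolding st_def by auto
qed

lemma Rset_card:
  assumes s: "\<sigma> \<in> fpf {..<m}" and mk: "m = 2 * k" and N: "N \<ge> 1" and a0: "a0 \<in> opn \<sigma> m"
  shows "card (Rset N m \<sigma> a0) \<le> N * (3 * N) ^ (k - 1) * 2 ^ k"
proof -
  let ?O = "opn \<sigma> m"
  let ?I = "{- int N..int N}"
  let ?F = "\<lambda>f. (f 0, restrict (st f) (?O - {a0}), restrict (\<lambda>a. st f (\<sigma> a) = st f a) ?O)"
  have fO: "finite ?O" unfolding opn_def by auto
  have a0m: "a0 < m" using a0 unfolding opn_def by auto
  have key: "st f a0 = st g a0"
    if f: "f \<in> Rset N m \<sigma> a0" and g: "g \<in> Rset N m \<sigma> a0"
      and e1: "\<And>a. a \<in> ?O - {a0} \<Longrightarrow> st f a = st g a"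
      and e2: "\<And>a. a \<in> ?O \<Longrightarrow> (st f (\<sigma> a) = st f a) = (st g (\<sigma> a) = st g a)" for f g
  proof -
    have h: "st h a + st h (\<sigma> a) = (if st h (\<sigma> a) = st h a then 2 * st h a else 0)"
      if "h \<in> Rset N m \<sigma> a0" "a \<in> ?O" for h a
    proof -
      have "a < m" using that(2) unfolding opn_def by auto
      then have "dd h (\<sigma> a) = dd h a" using that(1) unfolding Rset_def by auto
      then show ?thesis using dd_eq_st by fastforce
    qed
    have sum0: "(\<Sum>a\<in>?O. if st h (\<sigma> a) = st h a then 2 * st h a else 0) = 0"
      if "h \<in> Rset N m \<sigma> a0" for h
    proof -
      have "0 = (\<Sum>j<m. st h j)" using st_sum that unfolding Rset_def by auto
      also have "\<dots> = (\<Sum>a\<in>?O. st h a + st h (\<sigma> a))" by (rule pair_sum[OF s])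
      also have "\<dots> = (\<Sum>a\<in>?O. if st h (\<sigma> a) = st h a then 2 * st h a else 0)"
        by (rule sum.cong) (use h that in auto)
      finally show ?thesis by simp
    qed
    have split: "(\<Sum>a\<in>?O. if st h (\<sigma> a) = st h a then 2 * st h a else 0) =
        2 * st h a0 + (\<Sum>a\<in>?O - {a0}. if st h (\<sigma> a) = st h a then 2 * st h a else 0)"
      if "h \<in> Rset N m \<sigma> a0" for h
      using that a0 fO unfolding Rset_def by (simp add: sum.remove)
    have "(\<Sum>a\<in>?O - {a0}. if st f (\<sigma> a) = st f a then 2 * st f a else 0) =
        (\<Sum>a\<in>?O - {a0}. if st g (\<sigma> a) = st g a then 2 * st g a else 0)"
    proof (rule sum.cong)
      fix a assume a: "a \<in> ?O - {a0}"
      have c1: "(st f (\<sigma> a) = st f a) = (st g (\<sigma> a) = st g a)" using e2[of a] a by simp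
      have c2: "st f a = st g a" using e1[OF a] .
      show "(if st f (\<sigma> a) = st f a then 2 * st f a else 0) = (if st g (\<sigma> a) = st g a then 2 * st g a else 0)"
        by (rule if_cong[OF c1]) (use c2 in auto)
    qed simp
    then show ?thesis using sum0[OF f] sum0[OF g] split[OF f] split[OF g] by simp
  qed
  have "card (Rset N m \<sigma> a0) \<le> card ({..<N} \<times> ((?O - {a0}) \<rightarrow>\<^sub>E ?I) \<times> (?O \<rightarrow>\<^sub>E (UNIV::bool set)))"
  proof (rule card_inj_on_le[where f = ?F])
    show "inj_on ?F (Rset N m \<sigma> a0)"
    proof (rule inj_onI)
      fix f g assume f: "f \<in> Rset N m \<sigma> a0" and g: "g \<in> Rset N m \<sigma> a0" and e: "?F f = ?F g"
      have e0: "f 0 = g 0" using e by simp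
      have e1: "st f a = st g a" if "a \<in> ?O - {a0}" for a
      proof -
        have "restrict (st f) (?O - {a0}) a = restrict (st g) (?O - {a0}) a" using e by simp
        then show ?thesis using that by simp
      qed
      have e2: "(st f (\<sigma> a) = st f a) = (st g (\<sigma> a) = st g a)" if "a \<in> ?O" for a
      proof -
        have "restrict (\<lambda>a. st f (\<sigma> a) = st f a) ?O a = restrict (\<lambda>a. st g (\<sigma> a) = st g a) ?O a"
          using e by simp
        then show ?thesis using that by simp
      qed
      have eO: "st f a = st g a" if "a \<in> ?O" for a
        using e1 key[OF f g e1 e2] that by (cases "a = a0") auto
      have eS: "st f (\<sigma> a) = st g (\<sigma> a)" if "a \<in> ?O" for a
      proof -
        have am: "a < m" using that unfolding opn_def by auto
        have "dd f (\<sigma> a) = dd f a" "dd g (\<sigma> a) = dd g a" using f g am unfolding Rset_def by auto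
        then show ?thesis using dd_eq_st[of f "\<sigma> a" a] dd_eq_st[of g "\<sigma> a" a] e2[OF that] eO[OF that]
          by auto
      qed
      have "st f j = st g j" if "j < m" for j
        using opn_union[OF s] that eO eS by auto
      then show "f = g"
        using f g e0 unfolding Rset_def PS_def by (intro path_eq[of f m "{..<N}" g "{..<N}"]) auto
    qed
    show "?F ` Rset N m \<sigma> a0 \<subseteq> {..<N} \<times> ((?O - {a0}) \<rightarrow>\<^sub>E ?I) \<times> (?O \<rightarrow>\<^sub>E (UNIV::bool set))"
    proof (rule image_subsetI)
      fix f assume f: "f \<in> Rset N m \<sigma> a0"
      then have fp: "f \<in> PS N m" unfolding Rset_def by auto
      then have "f 0 < N" unfolding PS_def by (auto simp: PiE_iff)
      moreover have "restrict (st f) (?O - {a0}) \<in> (?O - {a0}) \<rightarrow>\<^sub>E ?I"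
        using st_bound[OF fp] unfolding opn_def by (auto simp: restrict_PiE_iff simp del: atLeastAtMost_iff)
      ultimately show "?F f \<in> {..<N} \<times> ((?O - {a0}) \<rightarrow>\<^sub>E ?I) \<times> (?O \<rightarrow>\<^sub>E (UNIV::bool set))"
        by (auto simp: restrict_PiE_iff)
    qed
    show "finite ({..<N} \<times> ((?O - {a0}) \<rightarrow>\<^sub>E ?I) \<times> (?O \<rightarrow>\<^sub>E (UNIV::bool set)))"
      using fO by (intro finite_cartesian_product finite_PiE) auto
  qed
  also have "\<dots> = N * (2 * N + 1) ^ (card ?O - 1) * 2 ^ card ?O"
  proof -
    have "nat (2 * int N) = 2 * N" by simp
    then show ?thesis using fO a0 by (simp add: card_cartesian_product card_PiE nat_add_distrib)
  qed
  also have "\<dots> \<le> N * (3 * N) ^ (k - 1) * 2 ^ k"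
  proof -
    have c: "card ?O \<le> k" by (rule opn_card[OF s mk])
    have "(2 * N + 1) ^ (card ?O - 1) \<le> (3 * N) ^ (card ?O - 1)" using N by (intro power_mono) auto
    also have "\<dots> \<le> (3 * N) ^ (k - 1)" using N c by (intro power_increasing) auto
    finally have 1: "(2 * N + 1) ^ (card ?O - 1) \<le> (3 * N) ^ (k - 1)" .
    have 2: "(2::nat) ^ card ?O \<le> 2 ^ k" using c by (intro power_increasing) auto
    show ?thesis using 1 2 by (intro mult_le_mono mult_le_mono2) auto
  qed
  finally show ?thesis .
qed

definition Qsame :: "nat \<Rightarrow> nat \<Rightarrow> (nat \<Rightarrow> nat) \<Rightarrow> (nat \<Rightarrow> nat) set" where
  "Qsame N m \<sigma> = {f \<in> PS N m. (\<forall>j<m. dd f (\<sigma> j) = dd f j) \<and> \<not> (\<forall>j<m. st f (\<sigma> j) = - st f j)}"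

lemma Qsame_card:
  assumes s: "\<sigma> \<in> fpf {..<m}" and mk: "m = 2 * k" and N: "N \<ge> 1"
  shows "card (Qsame N m \<sigma>) \<le> k * (N * (3 * N) ^ (k - 1) * 2 ^ k)"
proof -
  let ?O = "opn \<sigma> m"
  have fO: "finite ?O" unfolding opn_def by auto
  have sub: "Qsame N m \<sigma> \<subseteq> (\<Union>a0\<in>?O. Rset N m \<sigma> a0)"
  proof
    fix f assume f: "f \<in> Qsame N m \<sigma>"
    then obtain j where j: "j < m" "st f (\<sigma> j) \<noteq> - st f j" unfolding Qsame_def by auto
    have ddj: "dd f (\<sigma> j) = dd f j" using f j unfolding Qsame_def by auto
    then have sj: "st f (\<sigma> j) = st f j" using dd_eq_st j by blast
    show "f \<in> (\<Union>a0\<in>?O. Rset N m \<sigma> a0)"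
    proof (cases "j \<in> ?O")
      case True
      then show ?thesis using f sj unfolding Qsame_def Rset_def by auto
    next
      case False
      have "\<sigma> j \<in> ?O" "\<sigma> (\<sigma> j) = j" using opn_cover[OF s j(1) False] fpfD[OF s j(1)] by auto
      then show ?thesis using f sj unfolding Qsame_def Rset_def by (intro UN_I[of "\<sigma> j"]) auto
    qed
  qed
  have "card (Qsame N m \<sigma>) \<le> card (\<Union>a0\<in>?O. Rset N m \<sigma> a0)"
    by (rule card_mono[OF _ sub]) (use fO PS_finite in \<open>auto simp: Rset_def\<close>)
  also have "\<dots> \<le> (\<Sum>a0\<in>?O. card (Rset N m \<sigma> a0))" by (rule card_UN_le[OF fO])
  also have "\<dots> \<le> (\<Sum>a0\<in>?O. N * (3 * N) ^ (k - 1) * 2 ^ k)" by (intro sum_mono Rset_card[OF s mk N])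
  also have "\<dots> \<le> k * (N * (3 * N) ^ (k - 1) * 2 ^ k)" using opn_card[OF s mk] by simp
  finally show ?thesis .
qed


definition cnt :: "(nat \<Rightarrow> nat) \<Rightarrow> nat \<Rightarrow> nat \<Rightarrow> nat" where
  "cnt f m v = card {j. j < m \<and> dd f j = v}"

lemma pairing_exists:
  assumes c: "\<And>v. cnt f m v = 0 \<or> cnt f m v = 2"
  shows "\<exists>\<sigma>\<in>fpf {..<m}. \<forall>j<m. dd f (\<sigma> j) = dd f j"
proof -
  define S where "S j = {i. i < m \<and> dd f i = dd f j}" for j
  have S2: "\<exists>j'. j' \<noteq> j \<and> S j = {j, j'}" if j: "j < m" for j
  proof -
    have "j \<in> S j" using j unfolding S_def by auto
    then have "card (S j) \<noteq> 0" unfolding S_def by auto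
    then have "card (S j) = 2" using c[of "dd f j"] unfolding cnt_def S_def by auto
    then obtain x y where xy: "S j = {x, y}" "x \<noteq> y" by (auto simp: card_2_iff)
    show ?thesis
    proof (cases "j = x")
      case True then show ?thesis using xy by auto
    next
      case False
      then have "j = y" using xy \<open>j \<in> S j\<close> by auto
      then show ?thesis using xy by (intro exI[of _ x]) auto
    qed
  qed
  define \<sigma> where "\<sigma> = restrict (\<lambda>j. THE j'. j' \<noteq> j \<and> S j = {j, j'}) {..<m}"
  have sp: "\<sigma> j \<noteq> j \<and> S j = {j, \<sigma> j}" if j: "j < m" for j
  proof -
    obtain j' where j': "j' \<noteq> j" "S j = {j, j'}" using S2[OF j] by auto
    have "(THE j'. j' \<noteq> j \<and> S j = {j, j'}) = j'"
      by (rule the_equality) (use j' in \<open>auto simp: doubleton_eq_iff\<close>)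
    then show ?thesis using j j' unfolding \<sigma>_def by simp
  qed
  have props: "\<sigma> j < m \<and> \<sigma> j \<noteq> j \<and> dd f (\<sigma> j) = dd f j \<and> \<sigma> (\<sigma> j) = j" if j: "j < m" for j
  proof -
    have a: "\<sigma> j \<noteq> j" "S j = {j, \<sigma> j}" using sp[OF j] by auto
    have "\<sigma> j \<in> S j" using a by auto
    then have b: "\<sigma> j < m" "dd f (\<sigma> j) = dd f j" unfolding S_def by auto
    have "S (\<sigma> j) = S j" unfolding S_def using b by simp
    then have "{\<sigma> j, \<sigma> (\<sigma> j)} = {j, \<sigma> j}" using sp[OF b(1)] a by simp
    moreover have "\<sigma> (\<sigma> j) \<noteq> \<sigma> j" using sp[OF b(1)] by simp
    ultimately have "\<sigma> (\<sigma> j) = j" by (auto simp: doubleton_eq_iff)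
    then show ?thesis using a b by simp
  qed
  have "\<sigma> \<in> extensional {..<m}" unfolding \<sigma>_def by simp
  then have "\<sigma> \<in> {..<m} \<rightarrow>\<^sub>E {..<m}" using props by (auto simp: PiE_iff)
  then have "\<sigma> \<in> fpf {..<m}"
    unfolding fpf_def using props by auto
  then show ?thesis using props by blast
qed

definition cat2 :: "nat \<Rightarrow> nat \<Rightarrow> (nat \<Rightarrow> nat) set" where
  "cat2 N m = {f \<in> PS N m. \<forall>v. cnt f m v = 0 \<or> cnt f m v = 2}"

lemma cat2_card:
  assumes mk: "m = 2 * k" and N: "N \<ge> 1"
  shows "card (cat2 N m) \<le> odd_double_fact k * (N * N ^ k + k * (N * (3 * N) ^ (k - 1) * 2 ^ k))"
proof -
  have sub: "cat2 N m \<subseteq> (\<Union>\<sigma>\<in>fpf {..<m}. Qopp N m \<sigma> \<union> Qsame N m \<sigma>)"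
  proof
    fix f assume f: "f \<in> cat2 N m"
    then obtain \<sigma> where s: "\<sigma> \<in> fpf {..<m}" "\<forall>j<m. dd f (\<sigma> j) = dd f j"
      using pairing_exists unfolding cat2_def by blast
    then show "f \<in> (\<Union>\<sigma>\<in>fpf {..<m}. Qopp N m \<sigma> \<union> Qsame N m \<sigma>)"
      using f unfolding cat2_def Qopp_def Qsame_def by blast
  qed
  have ff: "finite (fpf {..<m})" by (rule fpf_finite) auto
  have "card (cat2 N m) \<le> card (\<Union>\<sigma>\<in>fpf {..<m}. Qopp N m \<sigma> \<union> Qsame N m \<sigma>)"
    by (rule card_mono[OF _ sub]) (use ff PS_finite in \<open>auto simp: Qopp_def Qsame_def\<close>)
  also have "\<dots> \<le> (\<Sum>\<sigma>\<in>fpf {..<m}. card (Qopp N m \<sigma> \<union> Qsame N m \<sigma>))" by (rule card_UN_le[OF ff])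
  also have "\<dots> \<le> (\<Sum>\<sigma>\<in>fpf {..<m}. N * N ^ k + k * (N * (3 * N) ^ (k - 1) * 2 ^ k))"
  proof (rule sum_mono)
    fix \<sigma> assume s: "\<sigma> \<in> fpf {..<m}"
    have "card (Qopp N m \<sigma> \<union> Qsame N m \<sigma>) \<le> card (Qopp N m \<sigma>) + card (Qsame N m \<sigma>)"
      by (rule card_Un_le)
    then show "card (Qopp N m \<sigma> \<union> Qsame N m \<sigma>) \<le> N * N ^ k + k * (N * (3 * N) ^ (k - 1) * 2 ^ k)"
      using Qopp_card[OF s mk N] Qsame_card[OF s mk N] by linarith
  qed
  also have "\<dots> = card (fpf {..<m}) * (N * N ^ k + k * (N * (3 * N) ^ (k - 1) * 2 ^ k))" by simp
  also have "\<dots> \<le> odd_double_fact k * (N * N ^ k + k * (N * (3 * N) ^ (k - 1) * 2 ^ k))"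
    using fpf_card[of "{..<m}" k] mk by (intro mult_le_mono1) auto
  finally show ?thesis .
qed


definition Pxy :: "nat \<Rightarrow> nat \<Rightarrow> nat \<Rightarrow> nat \<Rightarrow> (nat \<Rightarrow> nat) set" where
  "Pxy n m x y = {f \<in> {..m} \<rightarrow>\<^sub>E {..<n}. f 0 = x \<and> f m = y}"

lemma Pxy_finite: "finite (Pxy n m x y)"
  unfolding Pxy_def by (rule finite_subset[of _ "{..m} \<rightarrow>\<^sub>E {..<n}"]) (auto intro: finite_PiE)

lemma Pxy_0: "x < n \<Longrightarrow> Pxy n 0 x y = (if x = y then {restrict (\<lambda>_. x) {..0}} else {})"
proof -
  assume x: "x < n"
  show ?thesis
  proof (cases "x = y")
    case True
    have 1: "f = restrict (\<lambda>_. x) {..0}" if f: "f \<in> Pxy n 0 x y" for f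
    proof
      fix i show "f i = restrict (\<lambda>_. x) {..0} i"
      proof (cases "i = 0")
        case True then show ?thesis using f unfolding Pxy_def by simp
      next
        case False
        have "f \<in> extensional {..0}" using f unfolding Pxy_def by (simp add: PiE_def)
        then show ?thesis using False by (simp add: extensional_def)
      qed
    qed
    have 2: "restrict (\<lambda>_. x) {..0} \<in> Pxy n 0 x y" using True x unfolding Pxy_def by (simp add: restrict_PiE_iff)
    have "Pxy n 0 x y = {restrict (\<lambda>_. x) {..0}}" using 1 2 by blast
    then show ?thesis using True by simp
  next
    case False
    then show ?thesis unfolding Pxy_def by auto
  qed
qed
lemma pow_entry:
  fixes A :: "'a::comm_semiring_1 mat"
  assumes A: "A \<in> carrier_mat n n"
  shows "x < n \<Longrightarrow> y < n \<Longrightarrow> (A ^\<^sub>m m) $$ (x, y) = (\<Sum>f\<in>Pxy n m x y. \<Prod>j<m. A $$ (f j, f (Suc j)))"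
proof (induction m arbitrary: y)
  case 0
  then show ?case using A by (simp add: Pxy_0)
next
  case (Suc m)
  have dims: "dim_row (A ^\<^sub>m m) = n" "dim_col (A ^\<^sub>m m) = n" "dim_row A = n" "dim_col A = n"
    using A by auto
  have "(A ^\<^sub>m Suc m) $$ (x, y) = (\<Sum>z<n. (A ^\<^sub>m m) $$ (x, z) * A $$ (z, y))"
    using Suc.prems dims by (simp add: scalar_prod_def atLeast0LessThan)
  also have "\<dots> = (\<Sum>z<n. \<Sum>g\<in>Pxy n m x z. (\<Prod>j<m. A $$ (g j, g (Suc j))) * A $$ (z, y))"
    using Suc.IH Suc.prems by (simp add: sum_distrib_right)
  also have "\<dots> = (\<Sum>z<n. \<Sum>f\<in>{f \<in> Pxy n (Suc m) x y. f m = z}. \<Prod>j<Suc m. A $$ (f j, f (Suc j)))"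
  proof (rule sum.cong[OF refl])
    fix z assume z: "z \<in> {..<n}"
    show "(\<Sum>g\<in>Pxy n m x z. (\<Prod>j<m. A $$ (g j, g (Suc j))) * A $$ (z, y)) =
        (\<Sum>f\<in>{f \<in> Pxy n (Suc m) x y. f m = z}. \<Prod>j<Suc m. A $$ (f j, f (Suc j)))"
    proof (rule sum.reindex_bij_witness[where i = "\<lambda>f. restrict f {..m}" and j = "\<lambda>g. g(Suc m := y)"])
      fix f assume f: "f \<in> {f \<in> Pxy n (Suc m) x y. f m = z}"
      then have fe: "f \<in> {..Suc m} \<rightarrow>\<^sub>E {..<n}" unfolding Pxy_def by auto
      show "(restrict f {..m})(Suc m := y) = f"
      proof
        fix i show "((restrict f {..m})(Suc m := y)) i = f i"
          using f fe by (cases "i \<le> m"; cases "i = Suc m") (auto simp: Pxy_def PiE_iff extensional_def)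
      qed
      show "restrict f {..m} \<in> Pxy n m x z" using f fe unfolding Pxy_def by (auto simp: PiE_iff)
    next
      fix g assume g: "g \<in> Pxy n m x z"
      then have ge: "g \<in> {..m} \<rightarrow>\<^sub>E {..<n}" unfolding Pxy_def by auto
      show "restrict (g(Suc m := y)) {..m} = g"
      proof
        fix i show "restrict (g(Suc m := y)) {..m} i = g i"
          using ge by (cases "i \<le> m") (auto simp: PiE_iff extensional_def)
      qed
      show "g(Suc m := y) \<in> {f \<in> Pxy n (Suc m) x y. f m = z}"
        using g ge Suc.prems unfolding Pxy_def by (auto simp: PiE_iff extensional_def)
      have "(\<Prod>j<m. A $$ ((g(Suc m := y)) j, (g(Suc m := y)) (Suc j))) =
          (\<Prod>j<m. A $$ (g j, g (Suc j)))" by (intro prod.cong) auto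
      then show "(\<Prod>j<Suc m. A $$ ((g(Suc m := y)) j, (g(Suc m := y)) (Suc j))) =
          (\<Prod>j<m. A $$ (g j, g (Suc j))) * A $$ (z, y)"
        using g unfolding Pxy_def by (simp add: prod.lessThan_Suc)
    qed
  qed
  also have "\<dots> = (\<Sum>f\<in>Pxy n (Suc m) x y. \<Prod>j<Suc m. A $$ (f j, f (Suc j)))"
    by (rule sum.group) (use Pxy_finite in \<open>auto simp: Pxy_def PiE_iff\<close>)
  finally show ?case .
qed

lemma trace_pow:
  fixes A :: "'a::comm_semiring_1 mat"
  assumes A: "A \<in> carrier_mat n n"
  shows "(\<Sum>i<n. (A ^\<^sub>m m) $$ (i, i)) = (\<Sum>f\<in>PS n m. \<Prod>j<m. A $$ (f j, f (Suc j)))"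
proof -
  have "(\<Sum>i<n. (A ^\<^sub>m m) $$ (i, i)) = (\<Sum>i<n. \<Sum>f\<in>{f \<in> PS n m. f 0 = i}. \<Prod>j<m. A $$ (f j, f (Suc j)))"
  proof (rule sum.cong[OF refl])
    fix i assume "i \<in> {..<n}"
    then have "(A ^\<^sub>m m) $$ (i, i) = (\<Sum>f\<in>Pxy n m i i. \<Prod>j<m. A $$ (f j, f (Suc j)))"
      using pow_entry[OF A] by auto
    moreover have "Pxy n m i i = {f \<in> PS n m. f 0 = i}" unfolding Pxy_def PS_def by auto
    ultimately show "(A ^\<^sub>m m) $$ (i, i) = (\<Sum>f\<in>{f \<in> PS n m. f 0 = i}. \<Prod>j<m. A $$ (f j, f (Suc j)))" by simp
  qed
  also have "\<dots> = (\<Sum>f\<in>PS n m. \<Prod>j<m. A $$ (f j, f (Suc j)))"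
    by (rule sum.group) (use PS_finite in \<open>auto simp: PS_def PiE_iff\<close>)
  finally show ?thesis .
qed


abbreviation Mp :: "(real \<Rightarrow> real) \<Rightarrow> real measure" where
  "Mp p \<equiv> density lborel (\<lambda>x. ennreal (p x))"

definition mom :: "(real \<Rightarrow> real) \<Rightarrow> nat \<Rightarrow> real" where
  "mom p c = (\<integral>x. x ^ c \<partial>Mp p)"

definition amom :: "(real \<Rightarrow> real) \<Rightarrow> nat \<Rightarrow> real" where
  "amom p c = (LINT x|lborel. \<bar>x\<bar> ^ c * p x)"

lemma gd_meas: "good_density p \<Longrightarrow> p \<in> borel_measurable lborel"
  unfolding good_density_def by simp

lemma Mp_prob: assumes g: "good_density p" shows "prob_space (Mp p)"
proof (rule prob_spaceI)
  have pm[measurable]: "p \<in> borel_measurable lborel" using gd_meas[OF g] .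
  have "emeasure (Mp p) (space (Mp p)) = (\<integral>\<^sup>+ x. ennreal (p x) \<partial>lborel)"
    by (simp add: emeasure_density)
  also have "\<dots> = ennreal (LINT x|lborel. p x)"
    using g unfolding good_density_def by (intro nn_integral_eq_integral) auto
  also have "\<dots> = 1" using g unfolding good_density_def by simp
  finally show "emeasure (Mp p) (space (Mp p)) = 1" .
qed

lemma mom_integrable: assumes g: "good_density p" shows "integrable (Mp p) (\<lambda>x. x ^ c)"
proof -
  have pm[measurable]: "p \<in> borel_measurable lborel" using gd_meas[OF g] .
  have nn: "AE x in lborel. 0 \<le> p x" using g unfolding good_density_def by simp
  have ia: "integrable lborel (\<lambda>x. \<bar>x\<bar> ^ c * p x)" using g unfolding good_density_def by simp
  have "integrable lborel (\<lambda>x. p x *\<^sub>R x ^ c)"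
    by (rule Bochner_Integration.integrable_bound[OF ia])
       (use g in \<open>auto simp: good_density_def abs_mult power_abs\<close>)
  then show ?thesis by (subst integrable_density) (use nn in auto)
qed

lemma mom_eq: assumes g: "good_density p" shows "mom p c = (LINT x|lborel. x ^ c * p x)"
proof -
  have pm[measurable]: "p \<in> borel_measurable lborel" using gd_meas[OF g] .
  have nn: "AE x in lborel. 0 \<le> p x" using g unfolding good_density_def by simp
  show ?thesis unfolding mom_def by (subst integral_density) (use nn in \<open>auto simp: mult.commute\<close>)
qed

lemma mom_012: assumes g: "good_density p" shows "mom p 0 = 1" "mom p 1 = 0" "mom p 2 = 1"
  using g unfolding mom_eq[OF g] good_density_def by auto

lemma mom_abs: assumes g: "good_density p" shows "\<bar>mom p c\<bar> \<le> amom p c"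
proof -
  have ia: "integrable lborel (\<lambda>x. \<bar>x\<bar> ^ c * p x)" using g unfolding good_density_def by simp
  have "\<bar>mom p c\<bar> = \<bar>LINT x|lborel. x ^ c * p x\<bar>" using mom_eq[OF g] by simp
  also have "\<dots> \<le> (LINT x|lborel. \<bar>x ^ c * p x\<bar>)" by (rule integral_abs_bound)
  also have "\<dots> = amom p c" unfolding amom_def
    using g by (intro Bochner_Integration.integral_cong) (auto simp: good_density_def abs_mult power_abs)
  finally show ?thesis .
qed


lemma prod_group_pow:
  fixes h :: "nat \<Rightarrow> 'a::comm_monoid_mult"
  assumes "finite J" "finite V" "g ` J \<subseteq> V"
  shows "(\<Prod>j\<in>J. h (g j)) = (\<Prod>v\<in>V. h v ^ card {j\<in>J. g j = v})"
proof -
  have "(\<Prod>j\<in>J. h (g j)) = (\<Prod>v\<in>V. \<Prod>j\<in>{j\<in>J. g j = v}. h (g j))"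
    by (rule prod.group[symmetric]) (use assms in auto)
  also have "\<dots> = (\<Prod>v\<in>V. h v ^ card {j\<in>J. g j = v})"
  proof (rule prod.cong[OF refl])
    fix v
    have "(\<Prod>j\<in>{j\<in>J. g j = v}. h (g j)) = (\<Prod>j\<in>{j\<in>J. g j = v}. h v)" by (rule prod.cong) auto
    then show "(\<Prod>j\<in>{j\<in>J. g j = v}. h (g j)) = h v ^ card {j\<in>J. g j = v}" by simp
  qed
  finally show ?thesis .
qed

definition tw :: "(nat \<Rightarrow> real) \<Rightarrow> nat \<Rightarrow> real" where
  "tw b d = (if d = 0 then 0 else b d)"

definition wt :: "(real \<Rightarrow> real) \<Rightarrow> nat \<Rightarrow> nat \<Rightarrow> (nat \<Rightarrow> nat) \<Rightarrow> real" where
  "wt p N m f = (if \<forall>j<m. dd f j \<noteq> 0 then \<Prod>v\<in>{1..<N}. mom p (cnt f m v) else 0)"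

lemma expect_term:
  assumes g: "good_density p" and f: "f \<in> PS N m"
  shows "integrable (toeplitz_space p N) (\<lambda>b. \<Prod>j<m. tw b (dd f j))"
    "(\<integral>b. (\<Prod>j<m. tw b (dd f j)) \<partial>toeplitz_space p N) = wt p N m f"
proof -
  interpret PSF: product_sigma_finite "\<lambda>_::nat. Mp p"
    unfolding product_sigma_finite_def using prob_space_imp_sigma_finite[OF Mp_prob[OF g]] by simp
  have "integrable (toeplitz_space p N) (\<lambda>b. \<Prod>j<m. tw b (dd f j)) \<and>
      (\<integral>b. (\<Prod>j<m. tw b (dd f j)) \<partial>toeplitz_space p N) = wt p N m f"
  proof (cases "\<forall>j<m. dd f j \<noteq> 0")
    case False
    then obtain j0 where j0: "j0 < m" "dd f j0 = 0" by auto
    have "(\<lambda>b. \<Prod>j<m. tw b (dd f j)) = (\<lambda>b. 0)"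
    proof
      fix b show "(\<Prod>j<m. tw b (dd f j)) = 0"
        using j0 by (intro prod_zero bexI[of _ j0]) (auto simp: tw_def)
    qed
    moreover have "wt p N m f = 0" using False unfolding wt_def by meson
    ultimately show ?thesis by simp
  next
    case True
    have sub: "dd f ` {..<m} \<subseteq> {1..<N}" using True dd_lt[OF f] by fastforce
    have eq: "(\<lambda>b. \<Prod>j<m. tw b (dd f j)) = (\<lambda>b. \<Prod>v\<in>{1..<N}. b v ^ cnt f m v)"
    proof
      fix b
      have "(\<Prod>j<m. tw b (dd f j)) = (\<Prod>j<m. b (dd f j))" using True unfolding tw_def by (intro prod.cong) auto
      also have "\<dots> = (\<Prod>v\<in>{1..<N}. b v ^ card {j\<in>{..<m}. dd f j = v})"
        by (rule prod_group_pow) (use sub in auto)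
      also have "\<dots> = (\<Prod>v\<in>{1..<N}. b v ^ cnt f m v)" unfolding cnt_def by simp
      finally show "(\<Prod>j<m. tw b (dd f j)) = (\<Prod>v\<in>{1..<N}. b v ^ cnt f m v)" .
    qed
    have "integrable (toeplitz_space p N) (\<lambda>b. \<Prod>v\<in>{1..<N}. b v ^ cnt f m v)"
      unfolding toeplitz_space_def by (rule PSF.product_integrable_prod) (auto intro: mom_integrable[OF g])
    moreover have "(\<integral>b. (\<Prod>v\<in>{1..<N}. b v ^ cnt f m v) \<partial>toeplitz_space p N) = wt p N m f"
      unfolding toeplitz_space_def wt_def using True
      by (subst PSF.product_integral_prod) (auto intro: mom_integrable[OF g] simp: mom_def)
    ultimately show ?thesis unfolding eq by simp
  qed
  then show "integrable (toeplitz_space p N) (\<lambda>b. \<Prod>j<m. tw b (dd f j))"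
    "(\<integral>b. (\<Prod>j<m. tw b (dd f j)) \<partial>toeplitz_space p N) = wt p N m f" by auto
qed

lemma trace_expand:
  "mat_trace (toeplitz_mat N b ^\<^sub>m m) = (\<Sum>f\<in>PS N m. \<Prod>j<m. tw b (dd f j))"
proof -
  have A: "toeplitz_mat N b \<in> carrier_mat N N" unfolding toeplitz_mat_def by auto
  have "mat_trace (toeplitz_mat N b ^\<^sub>m m) = (\<Sum>i<N. (toeplitz_mat N b ^\<^sub>m m) $$ (i, i))"
    unfolding mat_trace_def using A by simp
  also have "\<dots> = (\<Sum>f\<in>PS N m. \<Prod>j<m. toeplitz_mat N b $$ (f j, f (Suc j)))"
    by (rule trace_pow[OF A])
  also have "\<dots> = (\<Sum>f\<in>PS N m. \<Prod>j<m. tw b (dd f j))"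
  proof (intro sum.cong refl prod.cong)
    fix f j assume f: "f \<in> PS N m" and j: "j \<in> {..<m}"
    have lt: "f j < N" "f (Suc j) < N" using f j unfolding PS_def by (auto simp: PiE_iff)
    have e: "nat \<bar>int (f j) - int (f (Suc j))\<bar> = dd f j" unfolding dd_def st_def by simp
    have "toeplitz_mat N b $$ (f j, f (Suc j)) = (let d = nat \<bar>int (f j) - int (f (Suc j))\<bar> in if d = 0 then 0 else b d)"
      unfolding toeplitz_mat_def using lt by simp
    then show "toeplitz_mat N b $$ (f j, f (Suc j)) = tw b (dd f j)"
      unfolding tw_def Let_def e .
  qed
  finally show ?thesis .
qed

lemma Mk_formula:
  assumes g: "good_density p"
  shows "Mk p (2 * k) N = real N powr (- (real k + 1)) * (\<Sum>f\<in>PS N (2 * k). wt p N (2 * k) f)"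
proof -
  have e: "real (2 * k) / 2 + 1 = real k + 1" by simp
  have "Mk p (2 * k) N = (\<integral>b. real N powr (- (real k + 1)) * (\<Sum>f\<in>PS N (2 * k). \<Prod>j<2 * k. tw b (dd f j)) \<partial>toeplitz_space p N)"
    unfolding Mk_def Mk_AN_def e trace_expand ..
  also have "\<dots> = real N powr (- (real k + 1)) * (\<integral>b. (\<Sum>f\<in>PS N (2 * k). \<Prod>j<2 * k. tw b (dd f j)) \<partial>toeplitz_space p N)"
    by simp
  also have "(\<integral>b. (\<Sum>f\<in>PS N (2 * k). \<Prod>j<2 * k. tw b (dd f j)) \<partial>toeplitz_space p N) =
      (\<Sum>f\<in>PS N (2 * k). \<integral>b. (\<Prod>j<2 * k. tw b (dd f j)) \<partial>toeplitz_space p N)"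
    by (rule Bochner_Integration.integral_sum) (rule expect_term(1)[OF g])
  also have "\<dots> = (\<Sum>f\<in>PS N (2 * k). wt p N (2 * k) f)"
    by (rule sum.cong) (auto intro: expect_term(2)[OF g])
  finally show ?thesis .
qed


definition Bc :: "(real \<Rightarrow> real) \<Rightarrow> nat \<Rightarrow> real" where
  "Bc p m = 1 + (\<Sum>c\<le>m. amom p c)"

lemma amom_nonneg: "good_density p \<Longrightarrow> 0 \<le> amom p c"
  unfolding amom_def good_density_def by (auto intro!: Bochner_Integration.integral_nonneg)

lemma Bc_ge: assumes g: "good_density p" and c: "c \<le> m" shows "amom p c \<le> Bc p m" "1 \<le> Bc p m"
proof -
  have "amom p c \<le> (\<Sum>c\<le>m. amom p c)"
    by (rule member_le_sum) (use c amom_nonneg[OF g] in auto)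
  then show "amom p c \<le> Bc p m" unfolding Bc_def by simp
  have "0 \<le> (\<Sum>c\<le>m. amom p c)" by (rule sum_nonneg) (use amom_nonneg[OF g] in auto)
  then show "1 \<le> Bc p m" unfolding Bc_def by simp
qed

lemma cnt_pos_img: "cnt f m v \<noteq> 0 \<Longrightarrow> v \<in> dd f ` {..<m}"
  unfolding cnt_def by (metis (mono_tags, lifting) Collect_empty_eq card.empty imageI lessThan_iff)

lemma cnt_le: "cnt f m v \<le> m"
proof -
  have "cnt f m v \<le> card {..<m}" unfolding cnt_def by (rule card_mono) auto
  then show ?thesis by simp
qed

lemma sum_cnt: "(\<Sum>v\<in>dd f ` {..<m}. cnt f m v) = m"
proof -
  have "(\<Sum>v\<in>dd f ` {..<m}. card {j\<in>{..<m}. dd f j = v}) = (\<Sum>v\<in>dd f ` {..<m}. \<Sum>j\<in>{j\<in>{..<m}. dd f j = v}. 1)"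
    by simp
  also have "\<dots> = (\<Sum>j\<in>{..<m}. (1::nat))" by (rule sum.group) auto
  finally show ?thesis unfolding cnt_def by simp
qed

lemma wt_bound:
  assumes g: "good_density p" and f: "f \<in> PS N m" and mk: "m = 2 * k"
  shows "wt p N m f \<le> (if f \<in> cat2 N m then 1 else 0) +
     (if f \<in> {f \<in> PS N m. card (dd f ` {..<m}) \<le> k - 1} then Bc p m ^ m else 0)"
proof -
  have B1: "1 \<le> Bc p m" using Bc_ge[OF g, of 0 m] by simp
  have R0: "0 \<le> (if f \<in> cat2 N m then 1 else 0) +
     (if f \<in> {f \<in> PS N m. card (dd f ` {..<m}) \<le> k - 1} then Bc p m ^ m else (0::real))"
    using B1 by auto
  let ?I = "dd f ` {..<m}"
  show ?thesis
  proof (cases "\<forall>j<m. dd f j \<noteq> 0")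
    case False
    then have "wt p N m f = 0" unfolding wt_def by meson
    then show ?thesis using R0 by simp
  next
    case nz: True
    have wt: "wt p N m f = (\<Prod>v\<in>{1..<N}. mom p (cnt f m v))" using nz unfolding wt_def by simp
    have inV: "v \<in> {1..<N}" if "v \<in> ?I" for v
      using that nz dd_lt[OF f] by fastforce
    show ?thesis
    proof (cases "\<exists>v. cnt f m v = 1")
      case True
      then obtain v where v: "cnt f m v = 1" by auto
      then have "v \<in> {1..<N}" using cnt_pos_img inV by fastforce
      then have "wt p N m f = 0" unfolding wt using v mom_012[OF g] by (intro prod_zero bexI[of _ v]) auto
      then show ?thesis using R0 by simp
    next
      case no1: False
      show ?thesis
      proof (cases "f \<in> cat2 N m")
        case True
        have "wt p N m f = 1" unfolding wt
        proof (rule prod.neutral, rule ballI)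
          fix v assume "v \<in> {1..<N}"
          have "cnt f m v = 0 \<or> cnt f m v = 2" using True unfolding cat2_def by auto
          then show "mom p (cnt f m v) = 1" using mom_012[OF g] by auto
        qed
        then show ?thesis using True B1 by simp
      next
        case n2: False
        then obtain v0 where v0: "cnt f m v0 \<noteq> 0" "cnt f m v0 \<noteq> 2" using f unfolding cat2_def by auto
        have v0I: "v0 \<in> ?I" using cnt_pos_img v0 by auto
        have ge2: "2 \<le> cnt f m v" if "v \<in> ?I" for v
        proof -
          from that obtain j where "j < m" "dd f j = v" by auto
          then have "cnt f m v \<noteq> 0" unfolding cnt_def by (auto simp: card_eq_0_iff)
          moreover have "cnt f m v \<noteq> 1" using no1 by blast
          ultimately show ?thesis by linarith
        qed
        have ge3: "3 \<le> cnt f m v0" using ge2[OF v0I] v0 by auto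
        have fI: "finite ?I" by simp
        have "m = cnt f m v0 + (\<Sum>v\<in>?I - {v0}. cnt f m v)"
          using sum_cnt[of f m] sum.remove[OF fI v0I, of "cnt f m"] by simp
        moreover have "(\<Sum>v\<in>?I - {v0}. 2) \<le> (\<Sum>v\<in>?I - {v0}. cnt f m v)"
          by (rule sum_mono) (use ge2 in auto)
        moreover have "(\<Sum>v\<in>?I - {v0}. (2::nat)) = 2 * (card ?I - 1)" using v0I fI by simp
        ultimately have "m \<ge> 3 + 2 * (card ?I - 1)" using ge3 by linarith
        moreover have "card ?I \<ge> 1" using v0I fI by (metis card_0_eq empty_iff less_one not_le)
        ultimately have cI: "card ?I \<le> k - 1" using mk by linarith
        have "wt p N m f \<le> \<bar>wt p N m f\<bar>" by simp
        also have "\<dots> = (\<Prod>v\<in>{1..<N}. \<bar>mom p (cnt f m v)\<bar>)" unfolding wt by (simp add: abs_prod)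
        also have "\<dots> \<le> (\<Prod>v\<in>{1..<N}. if v \<in> ?I then Bc p m else 1)"
        proof (rule prod_mono, rule conjI)
          fix v assume "v \<in> {1..<N}"
          show "0 \<le> \<bar>mom p (cnt f m v)\<bar>" by simp
          show "\<bar>mom p (cnt f m v)\<bar> \<le> (if v \<in> ?I then Bc p m else 1)"
          proof (cases "v \<in> ?I")
            case True
            then show ?thesis using mom_abs[OF g, of "cnt f m v"] Bc_ge(1)[OF g cnt_le[of f m v]] by simp
          next
            case False
            then have "cnt f m v = 0" using cnt_pos_img by blast
            then show ?thesis using False mom_012[OF g] by simp
          qed
        qed
        also have "\<dots> = Bc p m ^ card ({1..<N} \<inter> ?I)"
          by (simp add: prod.If_cases Int_def)
        also have "\<dots> \<le> Bc p m ^ m"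
        proof (rule power_increasing[OF _ B1])
          have "card ({1..<N} \<inter> ?I) \<le> card ?I" by (rule card_mono) auto
          also have "\<dots> \<le> card {..<m}" by (rule card_image_le) simp
          finally show "card ({1..<N} \<inter> ?I) \<le> m" by simp
        qed
        finally show ?thesis using f cI n2 by simp
      qed
    qed
  qed
qed


lemma sum_wt_bound:
  assumes g: "good_density p" and k: "k \<ge> 1" and N: "N \<ge> 1"
  shows "(\<Sum>f\<in>PS N (2 * k). wt p N (2 * k) f) \<le>
     real (odd_double_fact k) * real N ^ (k + 1) +
     (real (odd_double_fact k * k * 3 ^ (k - 1) * 2 ^ k) + Bc p (2 * k) ^ (2 * k) * real (k * (2 * (k - 1)) ^ (2 * k))) * real N ^ k"
proof -
  let ?m = "2 * k"
  let ?C3 = "{f \<in> PS N ?m. card (dd f ` {..<?m}) \<le> k - 1}"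
  let ?B = "Bc p ?m ^ ?m"
  have c2s: "cat2 N ?m \<subseteq> PS N ?m" unfolding cat2_def by auto
  have "(\<Sum>f\<in>PS N ?m. wt p N ?m f) \<le>
      (\<Sum>f\<in>PS N ?m. (if f \<in> cat2 N ?m then 1 else 0) + (if f \<in> ?C3 then ?B else 0))"
    by (rule sum_mono) (rule wt_bound[OF g _ refl])
  also have "\<dots> = (\<Sum>f\<in>PS N ?m. if f \<in> cat2 N ?m then 1 else 0) + (\<Sum>f\<in>PS N ?m. if f \<in> ?C3 then ?B else 0)"
    by (rule sum.distrib)
  also have "(\<Sum>f\<in>PS N ?m. if f \<in> cat2 N ?m then 1 else (0::real)) = real (card (cat2 N ?m))"
  proof -
    have "(\<Sum>f\<in>PS N ?m. if f \<in> cat2 N ?m then 1 else (0::real)) = (\<Sum>f\<in>{f\<in>PS N ?m. f \<in> cat2 N ?m}. 1)"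
      by (rule sum.inter_filter[symmetric]) (rule PS_finite)
    also have "{f\<in>PS N ?m. f \<in> cat2 N ?m} = cat2 N ?m" using c2s by auto
    finally show ?thesis by simp
  qed
  also have "(\<Sum>f\<in>PS N ?m. if f \<in> ?C3 then ?B else 0) = ?B * real (card ?C3)"
  proof -
    have "(\<Sum>f\<in>PS N ?m. if f \<in> ?C3 then ?B else 0) = (\<Sum>f\<in>{f\<in>PS N ?m. f \<in> ?C3}. ?B)"
      by (rule sum.inter_filter[symmetric]) (rule PS_finite)
    also have "{f\<in>PS N ?m. f \<in> ?C3} = ?C3" by auto
    finally show ?thesis by simp
  qed
  finally have S: "(\<Sum>f\<in>PS N ?m. wt p N ?m f) \<le> real (card (cat2 N ?m)) + ?B * real (card ?C3)" .
  have c2: "card (cat2 N ?m) \<le> odd_double_fact k * (N * N ^ k + k * (N * (3 * N) ^ (k - 1) * 2 ^ k))"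
    by (rule cat2_card[OF refl N])
  have e1: "N * (3 * N) ^ (k - 1) * 2 ^ k = 3 ^ (k - 1) * 2 ^ k * N ^ k"
  proof -
    have h: "N * N ^ (k - 1) = N ^ k" using k by (cases k) auto
    have "N * (3 * N) ^ (k - 1) * 2 ^ k = 3 ^ (k - 1) * 2 ^ k * (N * N ^ (k - 1))"
      by (simp only: power_mult_distrib ac_simps)
    then show ?thesis by (simp only: h)
  qed
  have c2': "real (card (cat2 N ?m)) \<le> real (odd_double_fact k) * real N ^ (k + 1) +
      real (odd_double_fact k * k * 3 ^ (k - 1) * 2 ^ k) * real N ^ k"
  proof -
    have h: "odd_double_fact k * (N * N ^ k + k * (3 ^ (k - 1) * 2 ^ k * N ^ k)) =
        odd_double_fact k * N ^ (k + 1) + odd_double_fact k * k * 3 ^ (k - 1) * 2 ^ k * N ^ k"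
    proof -
      have hN: "N ^ (k + 1) = N * N ^ k" by simp
      have hN': "N ^ (1 + k) = N * N ^ k" by simp
      show ?thesis by (simp only: hN hN' distrib_left ac_simps)
    qed
    have "card (cat2 N ?m) \<le> odd_double_fact k * N ^ (k + 1) + odd_double_fact k * k * 3 ^ (k - 1) * 2 ^ k * N ^ k"
      using c2 unfolding e1 h .
    then have "real (card (cat2 N ?m)) \<le> real (odd_double_fact k * N ^ (k + 1) + odd_double_fact k * k * 3 ^ (k - 1) * 2 ^ k * N ^ k)"
      by (rule of_nat_mono)
    then show ?thesis by (simp only: of_nat_add of_nat_mult of_nat_power)
  qed
  have c3: "card ?C3 \<le> (k - 1 + 1) * N ^ (k - 1) * (N * (2 * (k - 1)) ^ ?m)"
    by (rule card_fewvals[OF N])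
  have e2: "(k - 1 + 1) * N ^ (k - 1) * (N * (2 * (k - 1)) ^ ?m) = k * (2 * (k - 1)) ^ ?m * N ^ k"
  proof -
    have h: "N * N ^ (k - 1) = N ^ k" using k by (cases k) auto
    have h2: "k - 1 + 1 = k" using k by simp
    have h2': "1 + (k - 1) = k" using k by simp
    have "(k - 1 + 1) * N ^ (k - 1) * (N * (2 * (k - 1)) ^ ?m) = k * (2 * (k - 1)) ^ ?m * (N * N ^ (k - 1))"
      by (simp only: h2 h2' ac_simps)
    then show ?thesis by (simp only: h)
  qed
  have c3': "real (card ?C3) \<le> real (k * (2 * (k - 1)) ^ ?m) * real N ^ k"
  proof -
    have "real (card ?C3) \<le> real (k * (2 * (k - 1)) ^ ?m * N ^ k)" using c3 unfolding e2 by (rule of_nat_mono)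
    then show ?thesis by (simp only: of_nat_mult of_nat_power)
  qed
  have B0: "0 \<le> ?B" using Bc_ge(2)[OF g, of 0 ?m] by simp
  have "?B * real (card ?C3) \<le> ?B * (real (k * (2 * (k - 1)) ^ ?m) * real N ^ k)"
    by (rule mult_left_mono[OF c3' B0])
  then show ?thesis using S c2' by (simp add: algebra_simps)
qed

theorem mainTheorem3:
  fixes p :: "real \<Rightarrow> real" and k :: nat
  assumes "good_density p" and "k \<ge> 1"
  shows "\<exists>C::real. \<forall>N::nat. N \<ge> 1 \<longrightarrow>
           Mk p (2 * k) N \<le> real (odd_double_fact k) + C / real N"
proof -
  define C where "C = real (odd_double_fact k * k * 3 ^ (k - 1) * 2 ^ k) +
     Bc p (2 * k) ^ (2 * k) * real (k * (2 * (k - 1)) ^ (2 * k))"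
  show ?thesis
  proof (rule exI[of _ C], intro allI impI)
    fix N :: nat assume N: "N \<ge> 1"
    have Np: "real N > 0" using N by simp
    have pw: "real N powr (- (real k + 1)) = 1 / real N ^ (k + 1)"
    proof -
      have e: "real k + 1 = real (k + 1)" by simp
      have "real N powr (real k + 1) = real N ^ (k + 1)"
        unfolding e by (rule powr_realpow[OF Np])
      then show ?thesis by (simp only: powr_minus_divide)
    qed
    have S: "(\<Sum>f\<in>PS N (2 * k). wt p N (2 * k) f) \<le> real (odd_double_fact k) * real N ^ (k + 1) + C * real N ^ k"
      using sum_wt_bound[OF assms(1,2) N] unfolding C_def .
    have "Mk p (2 * k) N = (\<Sum>f\<in>PS N (2 * k). wt p N (2 * k) f) / real N ^ (k + 1)"
      using Mk_formula[OF assms(1)] pw by simp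
    also have "\<dots> \<le> (real (odd_double_fact k) * real N ^ (k + 1) + C * real N ^ k) / real N ^ (k + 1)"
      by (rule divide_right_mono[OF S]) simp
    also have "\<dots> = real (odd_double_fact k) + C / real N"
    proof -
      have "real N ^ (k + 1) = real N * real N ^ k" by simp
      moreover have "real N ^ k > 0" using Np by simp
      ultimately show ?thesis using Np by (simp add: add_divide_distrib)
    qed
    finally show "Mk p (2 * k) N \<le> real (odd_double_fact k) + C / real N" .
  qed
qed

end
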